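(* Let $k\ge 2$, let $d$ be a positive integer, let $1\le r<k$ and let $r<t\le k$. Let $\hat W=(W_1,\ldots,W_d)$ with each $W_i\in\{+,-\}^r$, and let $\hat p=(p_1,\ldots,p_d)$ be a sequence of pairwise disjoint $r$-tuples $p_j=(a_{j,1},\ldots,a_{j,r})$ with $a_{j,i}\in A_i$. For all sufficiently large $n$ (as a function of $k$ and $d$), for $T\sim\mathcal{R}(n,k)$, $$\Pr\left[|I_{\hat W}(\hat p,t)|\ge n(1-1/2^r)^d+n^{2/3}\right]\le \frac{1}{n^{kd+1}}.$$
   Context: $\mathcal{R}(n,k)$ is the probability space of $k$-partite tournaments with vertex classes $A_1,\ldots,A_k$ of size $n$ each, every edge between distinct classes oriented independently and uniformly at random. For an $r$-tuple $p=(a_1,\ldots,a_r)$ with $a_i\in A_i$, a vertex $v\in A_t$ ($t>r$) and $W\in\{+,-\}^r$, $v$ is $W$-consistent with $p$ if for each $i$, $(v,a_i)\in E(T)$ iff $W(i)=+$; otherwise $v$ is $W$-inconsistent with $p$. For $\hat p,\hat W$ as in the statement, $v\in A_t$ is $\hat W$-inconsistent with $\hat p$ if $v$ is $W_i$-inconsistent with $p_i$ for every $i=1,\ldots,d$, and $I_{\hat W}(\hat p,t)$ is the set of vertices of $A_t$ that are $\hat W$-inconsistent with $\hat p$. *)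

theory Defs
  imports "HOL-Probability.Probability"
begin

type_synonym vertex = "nat \<times> nat"   \<comment> \<open>(class index i in {1..k}, element index x < n)\<close>

definition vclass :: "nat \<Rightarrow> nat \<Rightarrow> vertex set" where
  "vclass n i = {(i, x) | x. x < n}"

definition vertices :: "nat \<Rightarrow> nat \<Rightarrow> vertex set" where
  "vertices n k = (\<Union>i\<in>{1..k}. vclass n i)"

definition kpartite_tournaments :: "nat \<Rightarrow> nat \<Rightarrow> (vertex \<times> vertex) set set" where
  "kpartite_tournaments n k =
     {E. E \<subseteq> {(u, v). u \<in> vertices n k \<and> v \<in> vertices n k \<and> fst u \<noteq> fst v} \<and>
         (\<forall>u\<in>vertices n k. \<forall>v\<in>vertices n k. fst u \<noteq> fst v \<longrightarrow> ((u, v) \<in> E \<longleftrightarrow> (v, u) \<notin> E))}"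

text \<open>R(n,k): uniform distribution over all such tournaments, equivalently independent
  uniform orientations of every edge.\<close>
definition R :: "nat \<Rightarrow> nat \<Rightarrow> (vertex \<times> vertex) set pmf" where
  "R n k = pmf_of_set (kpartite_tournaments n k)"

text \<open>v is W-consistent with the r-tuple p (p i is the i-th entry, i = 1..r);
  W i = True encodes +.\<close>
definition consistent ::
  "(vertex \<times> vertex) set \<Rightarrow> nat \<Rightarrow> (nat \<Rightarrow> bool) \<Rightarrow> (nat \<Rightarrow> vertex) \<Rightarrow> vertex \<Rightarrow> bool" where
  "consistent E r W p v = (\<forall>i\<in>{1..r}. ((v, p i) \<in> E \<longleftrightarrow> W i))"

definition inconsistent_set ::
  "(vertex \<times> vertex) set \<Rightarrow> nat \<Rightarrow> nat \<Rightarrow> nat \<Rightarrow> (nat \<Rightarrow> nat \<Rightarrow> bool)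
     \<Rightarrow> (nat \<Rightarrow> nat \<Rightarrow> vertex) \<Rightarrow> nat \<Rightarrow> vertex set" where
  "inconsistent_set E n r d W p t =
     {v \<in> vclass n t. \<forall>j\<in>{1..d}. \<not> consistent E r (W j) (p j) v}"

end

theory Submission
  imports Defs "HOL-Real_Asymp.Real_Asymp"
begin

lemma Pi_pmf_curry:
  assumes A: "finite A" and B: "finite B"
  shows "map_pmf (\<lambda>G a. if a \<in> A then (\<lambda>b. G (a,b)) else (\<lambda>_. dflt)) (Pi_pmf (A \<times> B) dflt (\<lambda>_. c))
         = Pi_pmf A (\<lambda>_. dflt) (\<lambda>_. Pi_pmf B dflt (\<lambda>_. c))"
proof (rule pmf_eqI)
  fix F :: "'a \<Rightarrow> 'b \<Rightarrow> 'c"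
  define cur where "cur = (\<lambda>(G::'a\<times>'b \<Rightarrow> 'c) a. if a \<in> A then (\<lambda>b. G (a,b)) else (\<lambda>_. dflt))"
  have AB: "finite (A \<times> B)" using A B by simp
  show "pmf (map_pmf (\<lambda>G a. if a \<in> A then (\<lambda>b. G (a,b)) else (\<lambda>_. dflt)) (Pi_pmf (A \<times> B) dflt (\<lambda>_. c))) F
        = pmf (Pi_pmf A (\<lambda>_. dflt) (\<lambda>_. Pi_pmf B dflt (\<lambda>_. c))) F"
  proof (cases "(\<forall>a. a \<notin> A \<longrightarrow> F a = (\<lambda>_. dflt)) \<and> (\<forall>a\<in>A. \<forall>b. b \<notin> B \<longrightarrow> F a b = dflt)")
    case True
    have "pmf (map_pmf cur (Pi_pmf (A \<times> B) dflt (\<lambda>_. c))) F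
        = measure_pmf.prob (Pi_pmf (A \<times> B) dflt (\<lambda>_. c)) (cur -` {F})" by (simp add: pmf_map)
    also have "\<dots> = measure_pmf.prob (Pi_pmf (A \<times> B) dflt (\<lambda>_. c)) (cur -` {F} \<inter> PiE_dflt (A \<times> B) dflt (\<lambda>_. UNIV))"
      by (intro measure_prob_cong_0) (auto simp: PiE_dflt_def pmf_Pi_outside AB)
    also have "cur -` {F} \<inter> PiE_dflt (A \<times> B) dflt (\<lambda>_. UNIV) = {\<lambda>(a,b). F a b}"
    proof (intro equalityI subsetI)
      fix G assume G: "G \<in> cur -` {F} \<inter> PiE_dflt (A \<times> B) dflt (\<lambda>_. UNIV)"
      show "G \<in> {\<lambda>(a,b). F a b}"
      proof -
        have "G (a, b) = F a b" for a b
        proof (cases "a \<in> A")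
          case True
          have "cur G = F" using G by simp
          then have "cur G a b = F a b" by simp
          then show ?thesis using True by (simp add: cur_def)
        next
          case False then show ?thesis using G \<open>(\<forall>a. a \<notin> A \<longrightarrow> F a = (\<lambda>_. dflt)) \<and> _\<close>
            by (auto simp: PiE_dflt_def)
        qed
        then show ?thesis by (auto simp: fun_eq_iff)
      qed
    next
      fix G assume "G \<in> {\<lambda>(a,b). F a b}"
      then show "G \<in> cur -` {F} \<inter> PiE_dflt (A \<times> B) dflt (\<lambda>_. UNIV)"
        using True by (auto simp: cur_def fun_eq_iff PiE_dflt_def)
    qed
    also have "measure_pmf.prob (Pi_pmf (A \<times> B) dflt (\<lambda>_. c)) {\<lambda>(a,b). F a b}
        = pmf (Pi_pmf (A \<times> B) dflt (\<lambda>_. c)) (\<lambda>(a,b). F a b)" by (simp add: measure_pmf_single)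
    also have "\<dots> = (\<Prod>y\<in>A \<times> B. pmf c (case y of (a,b) \<Rightarrow> F a b))"
      by (subst pmf_Pi') (use True AB in auto)
    also have "\<dots> = (\<Prod>a\<in>A. \<Prod>b\<in>B. pmf c (F a b))"
      by (simp add: prod.cartesian_product split_beta)
    also have "\<dots> = (\<Prod>a\<in>A. pmf (Pi_pmf B dflt (\<lambda>_. c)) (F a))"
      by (intro prod.cong refl, subst pmf_Pi') (use True B in auto)
    also have "\<dots> = pmf (Pi_pmf A (\<lambda>_. dflt) (\<lambda>_. Pi_pmf B dflt (\<lambda>_. c))) F"
      by (subst pmf_Pi') (use True A in auto)
    finally show ?thesis by (simp add: cur_def)
  next
    case False
    have R0: "pmf (Pi_pmf A (\<lambda>_. dflt) (\<lambda>_. Pi_pmf B dflt (\<lambda>_. c))) F = 0"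
    proof (cases "\<forall>a. a \<notin> A \<longrightarrow> F a = (\<lambda>_. dflt)")
      case True
      with False obtain a b where ab: "a \<in> A" "b \<notin> B" "F a b \<noteq> dflt" by auto
      have "pmf (Pi_pmf B dflt (\<lambda>_. c)) (F a) = 0"
        using ab B by (intro pmf_Pi_outside) auto
      then show ?thesis using ab A True by (subst pmf_Pi') (auto intro: prod_zero)
    next
      case False
      then show ?thesis using A by (intro pmf_Pi_outside) auto
    qed
    have "pmf (map_pmf cur (Pi_pmf (A \<times> B) dflt (\<lambda>_. c))) F
        = measure_pmf.prob (Pi_pmf (A \<times> B) dflt (\<lambda>_. c)) (cur -` {F})" by (simp add: pmf_map)
    also have "\<dots> = measure_pmf.prob (Pi_pmf (A \<times> B) dflt (\<lambda>_. c)) (cur -` {F} \<inter> PiE_dflt (A \<times> B) dflt (\<lambda>_. UNIV))"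
      by (intro measure_prob_cong_0) (auto simp: PiE_dflt_def pmf_Pi_outside AB)
    also have "cur -` {F} \<inter> PiE_dflt (A \<times> B) dflt (\<lambda>_. UNIV) = {}"
      using False by (auto simp: cur_def PiE_dflt_def fun_eq_iff)
    finally show ?thesis using R0 by (simp add: cur_def)
  qed
qed


definition Pairs :: "nat \<Rightarrow> nat \<Rightarrow> (vertex \<times> vertex) set" where
  "Pairs n k = {(u,v). u \<in> vertices n k \<and> v \<in> vertices n k \<and> fst u < fst v}"

definition tour :: "nat \<Rightarrow> nat \<Rightarrow> (vertex \<times> vertex \<Rightarrow> bool) \<Rightarrow> (vertex \<times> vertex) set" where
  "tour n k g = {(u,v). ((u,v) \<in> Pairs n k \<and> g (u,v)) \<or> ((v,u) \<in> Pairs n k \<and> \<not> g (v,u))}"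

lemma mem_tour: "(u,v) \<in> tour n k g \<longleftrightarrow> ((u,v) \<in> Pairs n k \<and> g (u,v)) \<or> ((v,u) \<in> Pairs n k \<and> \<not> g (v,u))"
  by (simp add: tour_def)
lemma mem_Pairs: "(u,v) \<in> Pairs n k \<longleftrightarrow> u \<in> vertices n k \<and> v \<in> vertices n k \<and> fst u < fst v"
  by (simp add: Pairs_def)

lemma vertices_sub: "vertices n k \<subseteq> {1..k} \<times> {..<n}"
  by (auto simp: vertices_def vclass_def)

lemma finite_vertices: "finite (vertices n k)"
  by (rule finite_subset[OF vertices_sub]) auto

lemma finite_Pairs: "finite (Pairs n k)"
  by (rule finite_subset[of _ "vertices n k \<times> vertices n k"]) (auto simp: Pairs_def finite_vertices)

lemma tour_image: "tour n k ` PiE_dflt (Pairs n k) False (\<lambda>_. UNIV) = kpartite_tournaments n k"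
proof (intro equalityI subsetI)
  fix E assume "E \<in> tour n k ` PiE_dflt (Pairs n k) False (\<lambda>_. UNIV)"
  then obtain g where E: "E = tour n k g" by auto
  show "E \<in> kpartite_tournaments n k"
    unfolding E kpartite_tournaments_def
  proof (intro CollectI conjI ballI impI)
    show "tour n k g \<subseteq> {(u, v). u \<in> vertices n k \<and> v \<in> vertices n k \<and> fst u \<noteq> fst v}"
    proof
      fix e assume a: "e \<in> tour n k g"
      obtain u v where uv: "e = (u,v)" by (cases e)
      show "e \<in> {(u, v). u \<in> vertices n k \<and> v \<in> vertices n k \<and> fst u \<noteq> fst v}"
        using a unfolding uv mem_tour mem_Pairs by auto
    qed
    fix u v assume "u \<in> vertices n k" "v \<in> vertices n k" "fst u \<noteq> fst v"
    then show "((u, v) \<in> tour n k g) = ((v, u) \<notin> tour n k g)"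
      unfolding mem_tour mem_Pairs by auto
  qed
next
  fix E assume E: "E \<in> kpartite_tournaments n k"
  have tt: "\<forall>u\<in>vertices n k. \<forall>v\<in>vertices n k. fst u \<noteq> fst v \<longrightarrow> ((u, v) \<in> E \<longleftrightarrow> (v, u) \<notin> E)"
    using E[unfolded kpartite_tournaments_def mem_Collect_eq] by (rule conjunct2)
  have ttr: "\<And>u v. u \<in> vertices n k \<Longrightarrow> v \<in> vertices n k \<Longrightarrow> fst u \<noteq> fst v \<Longrightarrow> ((u, v) \<in> E \<longleftrightarrow> (v, u) \<notin> E)"
    using tt by blast
  have Esub: "E \<subseteq> {(u, v). u \<in> vertices n k \<and> v \<in> vertices n k \<and> fst u \<noteq> fst v}"
    using E[unfolded kpartite_tournaments_def mem_Collect_eq] by (rule conjunct1)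
  define g where "g = (\<lambda>e. e \<in> Pairs n k \<and> e \<in> E)"
  have "g \<in> PiE_dflt (Pairs n k) False (\<lambda>_. UNIV)" unfolding PiE_dflt_def g_def by simp
  moreover have "tour n k g = E"
  proof (intro equalityI subsetI)
    fix e assume a: "e \<in> tour n k g"
    obtain u v where e: "e = (u,v)" by (cases e)
    have h: "((u,v) \<in> Pairs n k \<and> g (u,v)) \<or> ((v,u) \<in> Pairs n k \<and> \<not> g (v,u))"
      using a unfolding e mem_tour .
    from h show "e \<in> E"
    proof
      assume "(u,v) \<in> Pairs n k \<and> g (u,v)" then show ?thesis using e by (simp add: g_def)
    next
      assume a: "(v,u) \<in> Pairs n k \<and> \<not> g (v,u)"
      then have "u \<in> vertices n k" "v \<in> vertices n k" "fst v \<noteq> fst u" "(v,u) \<notin> E"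
        unfolding mem_Pairs g_def by auto
      then have "(u,v) \<in> E \<longleftrightarrow> (v,u) \<notin> E" by (intro ttr) auto
      then show ?thesis using \<open>(v,u) \<notin> E\<close> e by blast
    qed
  next
    fix e assume e: "e \<in> E"
    obtain u v where uv: "e = (u,v)" by (cases e)
    have uvE: "(u,v) \<in> E" using e uv by simp
    have V: "u \<in> vertices n k" "v \<in> vertices n k" and ne: "fst u \<noteq> fst v"
      using Esub uvE by auto
    show "e \<in> tour n k g"
    proof (cases "fst u < fst v")
      case True then show ?thesis using uvE V
        unfolding uv mem_tour mem_Pairs g_def by simp
    next
      case False
      then have "fst v < fst u" using ne by simp
      moreover have "(v,u) \<notin> E" using ttr[OF V ne] uvE by blast
      ultimately show ?thesis using V
        unfolding uv mem_tour mem_Pairs g_def by simp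
    qed
  qed
  ultimately show "E \<in> tour n k ` PiE_dflt (Pairs n k) False (\<lambda>_. UNIV)" by blast
qed

lemma tour_key: "e \<in> Pairs n k \<Longrightarrow> g e = (e \<in> tour n k g)"
proof -
  assume e: "e \<in> Pairs n k"
  obtain u v where uv: "e = (u,v)" by (cases e)
  have "u \<in> vertices n k" "v \<in> vertices n k" "fst u < fst v" using e uv by (auto simp: mem_Pairs)
  then show ?thesis unfolding uv mem_tour mem_Pairs by auto
qed

lemma tour_inj: "inj_on (tour n k) (PiE_dflt (Pairs n k) False (\<lambda>_. UNIV))"
proof (rule inj_onI)
  fix g1 g2 assume g1: "g1 \<in> PiE_dflt (Pairs n k) False (\<lambda>_. UNIV)"
    and g2: "g2 \<in> PiE_dflt (Pairs n k) False (\<lambda>_. UNIV)" and eq: "tour n k g1 = tour n k g2"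
  show "g1 = g2"
  proof
    fix e show "g1 e = g2 e"
    proof (cases "e \<in> Pairs n k")
      case True
      have "g1 e = (e \<in> tour n k g1)" by (rule tour_key[OF True])
      also have "\<dots> = (e \<in> tour n k g2)" using eq by simp
      also have "\<dots> = g2 e" by (rule tour_key[OF True, symmetric])
      finally show ?thesis .
    next
      case False
      have "g1 e = False" "g2 e = False" using g1 g2 False unfolding PiE_dflt_def mem_Collect_eq by blast+
      then show ?thesis by simp
    qed
  qed
qed

lemma R_eq: "R n k = map_pmf (tour n k) (Pi_pmf (Pairs n k) False (\<lambda>_. pmf_of_set UNIV))"
proof -
  have "Pi_pmf (Pairs n k) False (\<lambda>_. pmf_of_set UNIV) = pmf_of_set (PiE_dflt (Pairs n k) False (\<lambda>_. UNIV))"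
    by (rule Pi_pmf_of_set) (auto simp: finite_Pairs)
  moreover have "map_pmf (tour n k) (pmf_of_set (PiE_dflt (Pairs n k) False (\<lambda>_. UNIV)))
     = pmf_of_set (tour n k ` PiE_dflt (Pairs n k) False (\<lambda>_. UNIV))"
    by (rule map_pmf_of_set_inj[OF tour_inj]) (auto simp: finite_Pairs)
  ultimately show ?thesis by (simp add: R_def tour_image)
qed


lemma map_pmf_bool_bernoulli:
  "map_pmf P M = bernoulli_pmf (measure_pmf.prob M {x. P x})"
proof (rule pmf_eqI)
  fix b :: bool
  have c: "measure_pmf.prob M {x. \<not> P x} = 1 - measure_pmf.prob M {x. P x}"
  proof -
    have "{x. \<not> P x} = UNIV - {x. P x}" by auto
    then show ?thesis using measure_pmf.prob_compl[of "{x. P x}" M] by simp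
  qed
  show "pmf (map_pmf P M) b = pmf (bernoulli_pmf (measure_pmf.prob M {x. P x})) b"
  proof (cases b)
    case True
    have "P -` {True} = {x. P x}" by auto
    then show ?thesis using True by (simp add: pmf_map)
  next
    case False
    have "P -` {False} = {x. \<not> P x}" by auto
    then show ?thesis using False c by (simp add: pmf_map)
  qed
qed

lemma coin_prob: "measure_pmf.prob (pmf_of_set (UNIV :: bool set)) {b} = 1/2"
  by (simp add: measure_pmf_of_set)

lemma row_prob:
  fixes w :: "nat \<Rightarrow> bool"
  shows "measure_pmf.prob (Pi_pmf {1..r} False (\<lambda>_. pmf_of_set (UNIV :: bool set))) {f. \<exists>i\<in>{1..r}. f i = w i}
     = 1 - 1 / 2 ^ r"
proof -
  let ?Q = "Pi_pmf {1..r} False (\<lambda>_. pmf_of_set (UNIV :: bool set))"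
  have "measure_pmf.prob ?Q (Pi {1..r} (\<lambda>i. {\<not> w i})) = (\<Prod>i\<in>{1..r}. measure_pmf.prob (pmf_of_set UNIV) {\<not> w i})"
    by (rule measure_Pi_pmf_Pi) simp
  also have "\<dots> = (1/2) ^ r" by (simp add: coin_prob)
  finally have a: "measure_pmf.prob ?Q (Pi {1..r} (\<lambda>i. {\<not> w i})) = 1 / 2 ^ r"
    by (simp add: power_one_over)
  have "{f. \<exists>i\<in>{1..r}. f i = w i} = UNIV - Pi {1..r} (\<lambda>i. {\<not> w i})" by (auto simp: Pi_def)
  then show ?thesis using measure_pmf.prob_compl[of "Pi {1..r} (\<lambda>i. {\<not> w i})" ?Q] a by simp
qed

lemma block_prob:
  fixes W :: "nat \<Rightarrow> nat \<Rightarrow> bool"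
  shows "measure_pmf.prob (Pi_pmf ({1..d} \<times> {1..r}) False (\<lambda>_. pmf_of_set (UNIV :: bool set)))
           {f. \<forall>j\<in>{1..d}. \<exists>i\<in>{1..r}. f (j,i) = W j i} = (1 - 1 / 2 ^ r) ^ d"
proof -
  let ?c = "pmf_of_set (UNIV :: bool set)"
  let ?cur = "\<lambda>G a. if a \<in> {1..d} then (\<lambda>b. G (a,b)) else (\<lambda>_. False)"
  have "measure_pmf.prob (Pi_pmf ({1..d} \<times> {1..r}) False (\<lambda>_. ?c)) {f. \<forall>j\<in>{1..d}. \<exists>i\<in>{1..r}. f (j,i) = W j i}
      = measure_pmf.prob (Pi_pmf ({1..d} \<times> {1..r}) False (\<lambda>_. ?c)) (?cur -` Pi {1..d} (\<lambda>j. {f. \<exists>i\<in>{1..r}. f i = W j i}))"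
    by (intro arg_cong[where f = "measure_pmf.prob _"]) (auto simp: Pi_def)
  also have "\<dots> = measure_pmf.prob (map_pmf ?cur (Pi_pmf ({1..d} \<times> {1..r}) False (\<lambda>_. ?c))) (Pi {1..d} (\<lambda>j. {f. \<exists>i\<in>{1..r}. f i = W j i}))"
    by simp
  also have "map_pmf ?cur (Pi_pmf ({1..d} \<times> {1..r}) False (\<lambda>_. ?c)) = Pi_pmf {1..d} (\<lambda>_. False) (\<lambda>_. Pi_pmf {1..r} False (\<lambda>_. ?c))"
    by (rule Pi_pmf_curry) auto
  also have "measure_pmf.prob \<dots> (Pi {1..d} (\<lambda>j. {f. \<exists>i\<in>{1..r}. f i = W j i}))
      = (\<Prod>j\<in>{1..d}. measure_pmf.prob (Pi_pmf {1..r} False (\<lambda>_. ?c)) {f. \<exists>i\<in>{1..r}. f i = W j i})"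
    by (rule measure_Pi_pmf_Pi) simp
  also have "\<dots> = (1 - 1 / 2 ^ r) ^ d" unfolding row_prob by simp
  finally show ?thesis .
qed

lemma main_eq:
  fixes n k r t d :: nat and W :: "nat \<Rightarrow> nat \<Rightarrow> bool" and p :: "nat \<Rightarrow> nat \<Rightarrow> vertex" and c :: real
  assumes rt: "r < t" and tk: "t \<le> k"
    and pin: "\<forall>j\<in>{1..d}. \<forall>i\<in>{1..r}. p j i \<in> vclass n i"
    and disj: "\<forall>j\<in>{1..d}. \<forall>j'\<in>{1..d}. j \<noteq> j' \<longrightarrow> p j ` {1..r} \<inter> p j' ` {1..r} = {}"
  shows "measure_pmf.prob (R n k) {E. real (card (inconsistent_set E n r d W p t)) \<ge> c}
       = measure_pmf.prob (binomial_pmf n ((1 - 1/2^r)^d)) {m. real m \<ge> c}"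
proof -
  define coin where "coin = pmf_of_set (UNIV :: bool set)"
  define M where "M = Pi_pmf (Pairs n k) False (\<lambda>_. coin)"
  define B where "B = {1..d} \<times> {1..r}"
  define D where "D = {..<n} \<times> B"
  define hh where "hh = (\<lambda>f. \<forall>j\<in>{1..d}. \<exists>i\<in>{1..r}. f (j,i) = W j i)"
  define h where "h = (\<lambda>y::nat \<times> nat \<times> nat. if y \<in> D then (p (fst (snd y)) (snd (snd y)), (t, fst y)) else ((0,0),(0,0)))"
  define S where "S = h ` D"
  define q :: real where "q = (1 - 1/2^r)^d"
  define \<Phi> where "\<Phi> = (\<lambda>m::nat. real m \<ge> c)"
  define \<Psi> where "\<Psi> = (\<lambda>G::nat \<times> nat \<times> nat \<Rightarrow> bool. \<Phi> (card {x\<in>{..<n}. hh (\<lambda>b. G (x,b))}))"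
  have finB: "finite B" by (simp add: B_def)
  have finD: "finite D" by (simp add: D_def finB)
  have pmem: "p j i \<in> vclass n i" if "j \<in> {1..d}" "i \<in> {1..r}" for j i
    using pin that by blast
  have pfst: "fst (p j i) = i" "snd (p j i) < n" if "j \<in> {1..d}" "i \<in> {1..r}" for j i
    using pmem[OF that] by (auto simp: vclass_def)
  have pV: "p j i \<in> vertices n k" if "j \<in> {1..d}" "i \<in> {1..r}" for j i
    using pmem[OF that] that rt tk unfolding vertices_def by auto
  have tV: "(t, x) \<in> vertices n k" if "x < n" for x
    using that rt tk unfolding vertices_def vclass_def by auto
  have hD: "h (x,(j,i)) = (p j i, (t,x))" if "x < n" "j \<in> {1..d}" "i \<in> {1..r}" for x j i
    using that by (simp add: h_def D_def B_def)
  have tour_edge: "((t,x), p j i) \<in> tour n k g \<longleftrightarrow> \<not> g (p j i, (t,x))"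
    if "x < n" "j \<in> {1..d}" "i \<in> {1..r}" for x j i g
  proof -
    have "fst (p j i) < t" using pfst[OF that(2,3)] that(3) rt by simp
    then show ?thesis using pV[OF that(2,3)] tV[OF that(1)] unfolding mem_tour mem_Pairs by auto
  qed
  have card_eq: "card (inconsistent_set (tour n k g) n r d W p t) = card {x\<in>{..<n}. hh (\<lambda>b. g (h (x,b)))}" for g
  proof -
    have "inconsistent_set (tour n k g) n r d W p t = (\<lambda>x. (t,x)) ` {x\<in>{..<n}. hh (\<lambda>b. g (h (x,b)))}"
    proof (intro equalityI subsetI)
      fix v assume v: "v \<in> inconsistent_set (tour n k g) n r d W p t"
      then obtain x where x: "v = (t,x)" "x < n" by (auto simp: inconsistent_set_def vclass_def)
      have "hh (\<lambda>b. g (h (x,b)))" unfolding hh_def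
      proof
        fix j assume j: "j \<in> {1..d}"
        then have "\<not> consistent (tour n k g) r (W j) (p j) v" using v by (simp add: inconsistent_set_def)
        then obtain i where i: "i \<in> {1..r}" "\<not> ((v, p j i) \<in> tour n k g \<longleftrightarrow> W j i)"
          unfolding consistent_def by blast
        have "g (h (x, j, i)) = W j i"
          using i(2) tour_edge[OF x(2) j i(1), of g] hD[OF x(2) j i(1)] x(1) by auto
        then show "\<exists>i\<in>{1..r}. g (h (x, j, i)) = W j i" using i(1) by blast
      qed
      then show "v \<in> (\<lambda>x. (t,x)) ` {x\<in>{..<n}. hh (\<lambda>b. g (h (x,b)))}" using x by auto
    next
      fix v assume "v \<in> (\<lambda>x. (t,x)) ` {x\<in>{..<n}. hh (\<lambda>b. g (h (x,b)))}"
      then obtain x where x: "v = (t,x)" "x < n" and hx: "hh (\<lambda>b. g (h (x,b)))" by auto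
      have "\<not> consistent (tour n k g) r (W j) (p j) v" if j: "j \<in> {1..d}" for j
      proof -
        obtain i where i: "i \<in> {1..r}" "g (h (x,(j,i))) = W j i" using hx j unfolding hh_def by blast
        then show ?thesis
          using tour_edge[OF x(2) j i(1), of g] hD[OF x(2) j i(1)] x(1) unfolding consistent_def by auto
      qed
      then show "v \<in> inconsistent_set (tour n k g) n r d W p t"
        using x by (auto simp: inconsistent_set_def vclass_def)
    qed
    moreover have "inj (\<lambda>x::nat. (t,x))" by (auto simp: inj_def)
    ultimately show ?thesis by (simp add: card_image inj_on_subset[of _ UNIV])
  qed
  have step1: "measure_pmf.prob (R n k) {E. real (card (inconsistent_set E n r d W p t)) \<ge> c}
      = measure_pmf.prob M {g. \<Psi> (g \<circ> h)}"
  proof -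
    have "measure_pmf.prob (R n k) {E. real (card (inconsistent_set E n r d W p t)) \<ge> c}
        = measure_pmf.prob M (tour n k -` {E. real (card (inconsistent_set E n r d W p t)) \<ge> c})"
      by (simp only: R_eq M_def coin_def measure_map_pmf)
    also have "tour n k -` {E. real (card (inconsistent_set E n r d W p t)) \<ge> c} = {g. \<Psi> (g \<circ> h)}"
      by (simp only: vimage_Collect_eq card_eq \<Psi>_def \<Phi>_def o_def)
    finally show ?thesis .
  qed
  have inj_h: "inj_on h D"
  proof (rule inj_onI)
    fix y1 y2 assume y1: "y1 \<in> D" and y2: "y2 \<in> D" and eq: "h y1 = h y2"
    obtain x1 j1 i1 where Y1: "y1 = (x1,(j1,i1))" using prod_cases3 by blast
    obtain x2 j2 i2 where Y2: "y2 = (x2,(j2,i2))" using prod_cases3 by blast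
    have m1: "x1 < n" "j1 \<in> {1..d}" "i1 \<in> {1..r}" using y1 unfolding Y1 D_def B_def by auto
    have m2: "x2 < n" "j2 \<in> {1..d}" "i2 \<in> {1..r}" using y2 unfolding Y2 D_def B_def by auto
    have "h (x1,j1,i1) = h (x2,j2,i2)" using eq unfolding Y1 Y2 .
    then have "(p j1 i1, (t,x1)) = (p j2 i2, (t,x2))" by (simp only: hD[OF m1] hD[OF m2])
    then have e1: "p j1 i1 = p j2 i2" "x1 = x2" by simp_all
    have "j1 = j2"
    proof (rule ccontr)
      assume "j1 \<noteq> j2"
      then have dj: "p j1 ` {1..r} \<inter> p j2 ` {1..r} = {}" using disj m1(2) m2(2) by blast
      have a1: "p j1 i1 \<in> p j1 ` {1..r}" using m1(3) by (rule imageI)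
      have a2: "p j2 i2 \<in> p j2 ` {1..r}" using m2(3) by (rule imageI)
      have "p j1 i1 \<in> p j1 ` {1..r} \<inter> p j2 ` {1..r}" using a1 a2 e1(1) by simp
      then have "p j1 i1 \<in> {}" by (simp only: dj)
      then show False by simp
    qed
    moreover have "i1 = i2" using pfst(1)[OF m1(2,3)] pfst(1)[OF m2(2,3)] e1 by simp
    ultimately show "y1 = y2" unfolding Y1 Y2 using e1(2) by simp
  qed
  have bij_h: "bij_betw h D S" using inj_h by (simp add: S_def bij_betw_def)
  have h_out: "h y \<notin> S" if "y \<notin> D" for y
  proof
    assume "h y \<in> S"
    then obtain y' where y': "y' \<in> D" "h y = h y'" by (auto simp: S_def)
    obtain x j i where Y: "y' = (x,(j,i))" by (cases y') auto
    have m: "x < n" "j \<in> {1..d}" "i \<in> {1..r}" using y' Y by (auto simp: D_def B_def)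
    have "h y = ((0,0),(0,0))" using that by (simp add: h_def)
    then have "p j i = (0,0)" using y' Y hD[OF m] by simp
    then show False using pfst(1)[OF m(2,3)] m(3) by simp
  qed
  have S_sub: "S \<subseteq> Pairs n k"
  proof
    fix e assume "e \<in> S"
    then obtain y where y: "y \<in> D" "e = h y" by (auto simp: S_def)
    obtain x j i where Y: "y = (x,(j,i))" by (cases y) auto
    have m: "x < n" "j \<in> {1..d}" "i \<in> {1..r}" using y Y by (auto simp: D_def B_def)
    have "fst (p j i) < t" using pfst(1)[OF m(2,3)] m(3) rt by simp
    have e: "e = (p j i, (t,x))" using y(2) Y hD[OF m] by simp
    show "e \<in> Pairs n k" unfolding e mem_Pairs using pV[OF m(2,3)] tV[OF m(1)] \<open>fst (p j i) < t\<close> by simp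
  qed
  have step2: "measure_pmf.prob M {g. \<Psi> (g \<circ> h)} = measure_pmf.prob (Pi_pmf D False (\<lambda>_. coin)) {G. \<Psi> G}"
  proof -
    have PS: "Pi_pmf S False (\<lambda>_. coin) = map_pmf (\<lambda>f x. if x \<in> S then f x else False) M"
      unfolding M_def by (rule Pi_pmf_subset[OF finite_Pairs S_sub])
    have PD: "Pi_pmf D False (\<lambda>_. coin) = map_pmf (\<lambda>g. g \<circ> h) (Pi_pmf S False (\<lambda>_. coin))"
      by (rule Pi_pmf_bij_betw[OF finD bij_h h_out])
    have cong: "\<Psi> ((\<lambda>x. if x \<in> S then g x else False) \<circ> h) = \<Psi> (g \<circ> h)" for g
    proof -
      have hx: "hh (\<lambda>b. ((\<lambda>x. if x \<in> S then g x else False) \<circ> h) (x,b)) = hh (\<lambda>b. (g \<circ> h) (x,b))"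
        if "x \<in> {..<n}" for x
      proof -
        have "(x,(j,i)) \<in> D" if "j \<in> {1..d}" "i \<in> {1..r}" for j i
          using that \<open>x \<in> {..<n}\<close> by (simp add: D_def B_def)
        then have "h (x,(j,i)) \<in> S" if "j \<in> {1..d}" "i \<in> {1..r}" for j i
          using that by (simp add: S_def)
        then show ?thesis unfolding hh_def by auto
      qed
      have "{x\<in>{..<n}. hh (\<lambda>b. ((\<lambda>x. if x \<in> S then g x else False) \<circ> h) (x,b))}
          = {x\<in>{..<n}. hh (\<lambda>b. (g \<circ> h) (x,b))}"
        by (intro Collect_cong conj_cong refl hx)
      then show ?thesis by (simp only: \<Psi>_def)
    qed
    have "measure_pmf.prob (Pi_pmf D False (\<lambda>_. coin)) {G. \<Psi> G}
        = measure_pmf.prob M {g. \<Psi> ((\<lambda>x. if x \<in> S then g x else False) \<circ> h)}"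
      unfolding PD PS map_pmf_comp measure_map_pmf vimage_Collect_eq comp_apply ..
    also have "\<dots> = measure_pmf.prob M {g. \<Psi> (g \<circ> h)}" by (simp only: cong)
    finally show ?thesis by simp
  qed
  define cur where "cur = (\<lambda>(G::nat \<times> nat \<times> nat \<Rightarrow> bool) a. if a \<in> {..<n} then (\<lambda>b. G (a,b)) else (\<lambda>_. False))"
  define Q where "Q = Pi_pmf B False (\<lambda>_. coin)"
  have step3: "measure_pmf.prob (Pi_pmf D False (\<lambda>_. coin)) {G. \<Psi> G}
      = measure_pmf.prob (Pi_pmf {..<n} (\<lambda>_. False) (\<lambda>_. Q)) {F. \<Phi> (card {x\<in>{..<n}. hh (F x)})}"
  proof -
    have C: "map_pmf cur (Pi_pmf D False (\<lambda>_. coin)) = Pi_pmf {..<n} (\<lambda>_. False) (\<lambda>_. Q)"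
      unfolding cur_def D_def Q_def by (rule Pi_pmf_curry) (simp_all add: finB)
    have SE: "{G. \<Psi> G} = cur -` {F. \<Phi> (card {x\<in>{..<n}. hh (F x)})}"
    proof (rule set_eqI)
      fix G
      have "{x\<in>{..<n}. hh (\<lambda>b. G (x,b))} = {x\<in>{..<n}. hh (cur G x)}" by (auto simp: cur_def)
      then show "G \<in> {G. \<Psi> G} \<longleftrightarrow> G \<in> cur -` {F. \<Phi> (card {x\<in>{..<n}. hh (F x)})}"
        by (simp add: \<Psi>_def)
    qed
    have "measure_pmf.prob (Pi_pmf D False (\<lambda>_. coin)) {G. \<Psi> G}
        = measure_pmf.prob (map_pmf cur (Pi_pmf D False (\<lambda>_. coin))) {F. \<Phi> (card {x\<in>{..<n}. hh (F x)})}"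
      unfolding measure_map_pmf SE ..
    then show ?thesis unfolding C .
  qed
  have bern: "map_pmf hh Q = bernoulli_pmf q"
  proof -
    have "measure_pmf.prob Q {f. hh f} = q"
      unfolding Q_def B_def coin_def hh_def q_def by (rule block_prob)
    then show ?thesis using map_pmf_bool_bernoulli[of hh Q] by simp
  qed
  have q01: "q \<in> {0..1}"
  proof -
    have "0 \<le> 1 - 1 / (2::real) ^ r" "1 - 1 / (2::real) ^ r \<le> 1" by (simp_all add: field_simps)
    then show ?thesis unfolding q_def by (auto intro: power_le_one)
  qed
  have step4: "measure_pmf.prob (Pi_pmf {..<n} (\<lambda>_. False) (\<lambda>_. Q)) {F. \<Phi> (card {x\<in>{..<n}. hh (F x)})}
      = measure_pmf.prob (binomial_pmf n q) {m. \<Phi> m}"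
  proof -
    have PM: "Pi_pmf {..<n} (hh (\<lambda>_. False)) (\<lambda>_. map_pmf hh Q) = map_pmf (\<lambda>F. hh \<circ> F) (Pi_pmf {..<n} (\<lambda>_. False) (\<lambda>_. Q))"
      by (rule Pi_pmf_map) simp_all
    have BN: "binomial_pmf n q = map_pmf (\<lambda>f. card {x\<in>{..<n}. f x}) (Pi_pmf {..<n} (hh (\<lambda>_. False)) (\<lambda>_. bernoulli_pmf q))"
      using q01 by (intro binomial_pmf_altdef') auto
    have "measure_pmf.prob (binomial_pmf n q) {m. \<Phi> m}
       = measure_pmf.prob (Pi_pmf {..<n} (\<lambda>_. False) (\<lambda>_. Q)) {F. \<Phi> (card {x\<in>{..<n}. (hh \<circ> F) x})}"
      unfolding BN bern[symmetric] PM by simp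
    then show ?thesis by (simp add: o_def)
  qed
  have fin: "measure_pmf.prob (binomial_pmf n q) {m. \<Phi> m} = measure_pmf.prob (binomial_pmf n ((1 - 1/2^r)^d)) {m. real m \<ge> c}"
    by (simp add: \<Phi>_def q_def)
  show ?thesis unfolding step1 step2 step3 step4 fin ..
qed

lemma asy: fixes m :: nat
  shows "eventually (\<lambda>n. exp (-2 * (real n powr (2/3))^2 / real n) * real n ^ m \<le> 1) sequentially"
  by real_asymp

theorem lemma4p9:
  fixes k d :: nat
  assumes "k \<ge> 2" and "d \<ge> 1"
  shows "\<exists>N. \<forall>n\<ge>N. \<forall>r t (W :: nat \<Rightarrow> nat \<Rightarrow> bool) (p :: nat \<Rightarrow> nat \<Rightarrow> vertex).
           1 \<le> r \<longrightarrow> r < k \<longrightarrow> r < t \<longrightarrow> t \<le> k \<longrightarrow>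
           (\<forall>j\<in>{1..d}. \<forall>i\<in>{1..r}. p j i \<in> vclass n i) \<longrightarrow>
           (\<forall>j\<in>{1..d}. \<forall>j'\<in>{1..d}. j \<noteq> j' \<longrightarrow> p j ` {1..r} \<inter> p j' ` {1..r} = {}) \<longrightarrow>
           measure_pmf.prob (R n k)
             {E. real (card (inconsistent_set E n r d W p t))
                   \<ge> real n * (1 - 1 / 2 ^ r) ^ d + real n powr (2/3)}
           \<le> 1 / real n ^ (k * d + 1)"
proof -
  obtain N0 where N0: "\<And>n. n \<ge> N0 \<Longrightarrow> exp (-2 * (real n powr (2/3))^2 / real n) * real n ^ (k * d + 1) \<le> 1"
    using asy[of "k * d + 1"] unfolding eventually_sequentially by blast
  show ?thesis
  proof (intro exI[of _ "max N0 1"] allI impI)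
    fix n r t and W :: "nat \<Rightarrow> nat \<Rightarrow> bool" and p :: "nat \<Rightarrow> nat \<Rightarrow> vertex"
    assume n: "max N0 1 \<le> n" and r1: "1 \<le> r" and rk: "r < k" and rt: "r < t" and tk: "t \<le> k"
      and pin: "\<forall>j\<in>{1..d}. \<forall>i\<in>{1..r}. p j i \<in> vclass n i"
      and disj: "\<forall>j\<in>{1..d}. \<forall>j'\<in>{1..d}. j \<noteq> j' \<longrightarrow> p j ` {1..r} \<inter> p j' ` {1..r} = {}"
    define q :: real where "q = (1 - 1 / 2 ^ r) ^ d"
    have npos: "0 < n" using n by simp
    have q01: "q \<in> {0..1}"
    proof -
      have "0 \<le> 1 - 1 / (2::real) ^ r" "1 - 1 / (2::real) ^ r \<le> 1" by (simp_all add: field_simps)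
      then show ?thesis unfolding q_def by (auto intro: power_le_one)
    qed
    have bd: "binomial_distribution q" using q01 by (simp add: binomial_distribution_def)
    have "measure_pmf.prob (R n k)
             {E. real (card (inconsistent_set E n r d W p t)) \<ge> real n * (1 - 1 / 2 ^ r) ^ d + real n powr (2/3)}
        = measure_pmf.prob (binomial_pmf n q) {m. real m \<ge> real n * q + real n powr (2/3)}"
      unfolding q_def by (rule main_eq[OF rt tk pin disj])
    also have "\<dots> \<le> exp (-2 * (real n powr (2/3))^2 / real n)"
      by (rule binomial_distribution.prob_ge[OF bd npos]) simp
    also have "\<dots> \<le> 1 / real n ^ (k * d + 1)"
    proof -
      have "exp (-2 * (real n powr (2/3))^2 / real n) * real n ^ (k * d + 1) \<le> 1" using N0 n by simp
      moreover have "real n ^ (k * d + 1) > 0" using npos by simp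
      ultimately show ?thesis by (simp add: pos_le_divide_eq)
    qed
    finally show "measure_pmf.prob (R n k)
             {E. real (card (inconsistent_set E n r d W p t)) \<ge> real n * (1 - 1 / 2 ^ r) ^ d + real n powr (2/3)}
           \<le> 1 / real n ^ (k * d + 1)" .
  qed
qed

end
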